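(* Let $\{\mathcal S,\mathcal C,\mathcal R,\mathcal K(t)\}$ with $\mathcal S=\{S_1,\dots,S_N\}$ be a weakly reversible non-autonomous mass-action system with bounded kinetics whose network consists of a single linkage class. Then for each $x_0\in\mathbb R^N_{>0}$, the solution $\phi(t,x_0)$ satisfies $\limsup_{t\to\infty}|\phi(t,x_0)|<\infty$; that is, the system has bounded trajectories.
   Context: A chemical reaction network on species $S_1,\dots,S_N$ consists of a finite set $\mathcal C\subset\mathbb Z^N_{\ge0}$ of complexes and a finite set $\mathcal R$ of reactions $y\to y'$ with $y,y'\in\mathcal C$, $y\ne y'$, such that every species has positive coefficient in some complex and every complex appears in some reaction; reactions are enumerated $y_k\to y_k'$. The reaction diagram is the directed graph on $\mathcal C$ with an edge for each reaction; its connected components are the linkage classes; the network is weakly reversible if each linkage class is strongly connected. A non-autonomous mass-action system with bounded kinetics is such a network with functions $\kappa_k:[0,\infty)\to\mathbb R$ and $\eta>0$ such that $\eta<\kappa_k(t)<1/\eta$ for all $t\ge0$, $k$, and dynamics $\dot x(t)=\sum_k\kappa_k(t)x(t)^{y_k}(y_k'-y_k)$, where $x^{y}=\prod_ix_i^{y_i}$ ($0^0=1$). $\phi(t,x_0)$ denotes the solution with initial condition $x_0$. *)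

theory Defs
  imports "HOL-Analysis.Analysis"
begin

text \<open>Species are indexed by a finite type 'n (so N = CARD('n)); concentrations are
  vectors in real^'n; complexes are functions 'n => nat (elements of Z^N_{>=0}).\<close>

type_synonym 'n complex = "'n \<Rightarrow> nat"
type_synonym 'n reaction = "'n complex \<times> 'n complex"

definition cvec :: "'n::finite complex \<Rightarrow> real^'n" where
  "cvec y = (\<chi> i. real (y i))"

text \<open>x^y = prod_i x_i^{y_i}, with 0^0 = 1.\<close>
definition monom :: "real^'n::finite \<Rightarrow> 'n complex \<Rightarrow> real" where
  "monom x y = (\<Prod>i\<in>UNIV. (x$i) ^ (y i))"

definition crn :: "'n::finite complex set \<Rightarrow> 'n reaction set \<Rightarrow> bool" where
  "crn C R \<longleftrightarrow> finite C \<and> finite R \<and> R \<subseteq> C \<times> C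
     \<and> (\<forall>(y, y')\<in>R. y \<noteq> y')
     \<and> (\<forall>i. \<exists>y\<in>C. y i > 0)
     \<and> (\<forall>y\<in>C. \<exists>r\<in>R. y = fst r \<or> y = snd r)"

definition same_linkage_class :: "'n reaction set \<Rightarrow> 'n complex \<Rightarrow> 'n complex \<Rightarrow> bool" where
  "same_linkage_class R y y' \<longleftrightarrow> (y, y') \<in> (R \<union> R\<inverse>)\<^sup>*"

definition weakly_reversible :: "'n complex set \<Rightarrow> 'n reaction set \<Rightarrow> bool" where
  "weakly_reversible C R \<longleftrightarrow>
     (\<forall>y\<in>C. \<forall>y'\<in>C. same_linkage_class R y y' \<longrightarrow> (y, y') \<in> R\<^sup>*)"

definition single_linkage_class :: "'n complex set \<Rightarrow> 'n reaction set \<Rightarrow> bool" where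
  "single_linkage_class C R \<longleftrightarrow> (\<forall>y\<in>C. \<forall>y'\<in>C. same_linkage_class R y y')"

definition bounded_kinetics :: "'n reaction set \<Rightarrow> ('n reaction \<Rightarrow> real \<Rightarrow> real) \<Rightarrow> bool" where
  "bounded_kinetics R \<kappa> \<longleftrightarrow>
     (\<exists>\<eta>>0. \<forall>r\<in>R. \<forall>t\<ge>0. \<eta> < \<kappa> r t \<and> \<kappa> r t < 1 / \<eta>)"

definition mak_rhs :: "'n::finite reaction set \<Rightarrow> ('n reaction \<Rightarrow> real \<Rightarrow> real)
    \<Rightarrow> real \<Rightarrow> real^'n \<Rightarrow> real^'n" where
  "mak_rhs R \<kappa> t x = (\<Sum>r\<in>R. (\<kappa> r t * monom x (fst r)) *\<^sub>R (cvec (snd r) - cvec (fst r)))"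

text \<open>A solution on [0,\<infinity>) with initial value x0, in integral (Caratheodory) form;
  this includes every classical C^1 solution.\<close>
definition is_solution :: "'n::finite reaction set \<Rightarrow> ('n reaction \<Rightarrow> real \<Rightarrow> real)
    \<Rightarrow> real^'n \<Rightarrow> (real \<Rightarrow> real^'n) \<Rightarrow> bool" where
  "is_solution R \<kappa> x0 x \<longleftrightarrow> x 0 = x0 \<and> continuous_on {0..} x \<and>
     (\<forall>t\<ge>0. ((\<lambda>s. mak_rhs R \<kappa> s (x s)) has_integral (x t - x0)) {0..t})"

end

theory Submission
  imports Defs
begin


lemma local_to_global_mono:
  fixes h :: "real \<Rightarrow> real"
  assumes ab: "a \<le> b"
    and loc: "\<And>c. c \<in> {a..b} \<Longrightarrow> \<exists>d>0. \<forall>u v. u \<in> {a..b} \<and> v \<in> {a..b} \<and> u \<le> c \<and> c \<le> v \<and> v - u < d \<longrightarrow> h v \<le> h u"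
  shows "h b \<le> h a"
proof -
  obtain d where d: "\<And>c. c \<in> {a..b} \<Longrightarrow> d c > 0 \<and> (\<forall>u v. u \<in> {a..b} \<and> v \<in> {a..b} \<and> u \<le> c \<and> c \<le> v \<and> v - u < d c \<longrightarrow> h v \<le> h u)"
    using loc by metis
  define e where "e c = (if c \<in> {a..b} then d c / 2 else 1)" for c
  have "gauge (\<lambda>c. ball c (e c))"
    by (rule gauge_ball_dependent) (auto simp: e_def d)
  then obtain p where p: "p tagged_division_of {a..b}" "(\<lambda>c. ball c (e c)) fine p"
    using fine_division_exists_real by blast
  have "sum (\<lambda>(x,K). h(Sup K) - h(Inf K)) p = h b - h a"
    by (rule additive_tagged_division_1[OF ab p(1)])
  moreover have "sum (\<lambda>(x,K). h(Sup K) - h(Inf K)) p \<le> 0"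
  proof (rule sum_nonpos, clarify)
    fix c K assume cK: "(c,K) \<in> p"
    have cK': "c \<in> K" "K \<subseteq> {a..b}" using p(1) cK by auto
    obtain u v where K: "K = cbox u v" using p(1) cK by blast
    have uv: "u \<le> v" using cK' K by auto
    have K2: "K = {u..v}" using K by auto
    have c: "c \<in> {a..b}" "u \<le> c" "c \<le> v" using cK' K2 by auto
    have sub: "K \<subseteq> ball c (e c)" using p(2) cK unfolding fine_def by auto
    have "u \<in> ball c (e c)" "v \<in> ball c (e c)" using sub K2 uv by auto
    hence "v - u < d c" using c by (auto simp: e_def dist_real_def)
    moreover have "u \<in> {a..b}" "v \<in> {a..b}" using cK'(2) K2 uv by auto
    ultimately have "h v \<le> h u" using d[OF c(1)] c by blast
    moreover have "Sup K = v" "Inf K = u" using K2 uv by auto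
    ultimately show "h (Sup K) - h (Inf K) \<le> 0" by simp
  qed
  ultimately show ?thesis by simp
qed



lemma span_lower_bound:
  fixes W :: "'a::euclidean_space set"
  assumes fin: "finite W"
  shows "\<exists>m>0. \<forall>v\<in>span W. m * norm v \<le> (\<Sum>w\<in>W. \<bar>v \<bullet> w\<bar>)"
proof (cases "span W \<inter> sphere 0 1 = {}")
  case True
  have "v = 0" if "v \<in> span W" for v
  proof (rule ccontr)
    assume "v \<noteq> 0"
    hence "v /\<^sub>R norm v \<in> span W \<inter> sphere 0 1" using that by (simp add: span_mul)
    thus False using True by blast
  qed
  hence "\<forall>v\<in>span W. 1 * norm v \<le> (\<Sum>w\<in>W. \<bar>v \<bullet> w\<bar>)"
  proof (intro ballI)
    fix v assume "v \<in> span W"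
    hence "v = 0" using \<open>\<And>v. v \<in> span W \<Longrightarrow> v = 0\<close> by blast
    thus "1 * norm v \<le> (\<Sum>w\<in>W. \<bar>v \<bullet> w\<bar>)" by simp
  qed
  thus ?thesis by (intro exI[of _ 1]) auto
next
  case False
  define \<psi> where "\<psi> v = (\<Sum>w\<in>W. \<bar>v \<bullet> w\<bar>)" for v
  have cpt: "compact (span W \<inter> sphere 0 1)" by (intro closed_Int_compact) auto
  have cont: "continuous_on (span W \<inter> sphere 0 1) \<psi>" unfolding \<psi>_def
    by (intro continuous_intros)
  obtain v0 where v0: "v0 \<in> span W \<inter> sphere 0 1" "\<And>y. y \<in> span W \<inter> sphere 0 1 \<Longrightarrow> \<psi> v0 \<le> \<psi> y"
    using continuous_attains_inf[OF cpt False cont] by blast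
  have pos: "\<psi> v0 > 0"
  proof (rule ccontr)
    assume "\<not> \<psi> v0 > 0"
    moreover have "\<psi> v0 \<ge> 0" unfolding \<psi>_def by (intro sum_nonneg) auto
    ultimately have "\<psi> v0 = 0" by linarith
    hence "\<forall>w\<in>W. \<bar>v0 \<bullet> w\<bar> = 0" unfolding \<psi>_def using fin by (subst (asm) sum_nonneg_eq_0_iff) auto
    hence "orthogonal v0 v0" using orthogonal_to_span[of v0 W v0] v0(1) by (auto simp: orthogonal_def)
    thus False using v0(1) by (auto simp: orthogonal_def)
  qed
  show ?thesis
  proof (intro exI[of _ "\<psi> v0"] conjI pos ballI)
    fix v assume v: "v \<in> span W"
    show "\<psi> v0 * norm v \<le> (\<Sum>w\<in>W. \<bar>v \<bullet> w\<bar>)"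
    proof (cases "v = 0")
      case True thus ?thesis by simp
    next
      case False
      have "v /\<^sub>R norm v \<in> span W \<inter> sphere 0 1" using v False by (simp add: span_mul)
      hence "\<psi> v0 \<le> \<psi> (v /\<^sub>R norm v)" by (rule v0(2))
      also have "\<psi> (v /\<^sub>R norm v) = \<psi> v / norm v" unfolding \<psi>_def
        by (simp add: sum_divide_distrib abs_mult divide_inverse mult.commute sum_distrib_left)
      finally show ?thesis using False by (simp add: \<psi>_def field_simps)
    qed
  qed
qed

definition lnv :: "real^'n::finite \<Rightarrow> real^'n" where
  "lnv x = (\<chi> i. ln (x$i))"

lemma birch_bound:
  fixes W :: "(real^'n::finite) set" and x0 :: "real^'n"
  assumes fin: "finite W" and x0: "\<forall>i. x0$i > 0"
  shows "\<exists>B. \<forall>x. (\<forall>i. x$i > 0) \<longrightarrow> (\<forall>z. (\<forall>w\<in>W. z \<bullet> w = 0) \<longrightarrow> z \<bullet> (x - x0) = 0)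
          \<longrightarrow> (\<forall>w\<in>W. \<bar>lnv x \<bullet> w\<bar> \<le> D) \<longrightarrow> norm x \<le> B"
proof -
  obtain m where m: "m > 0" "\<And>v. v \<in> span W \<Longrightarrow> m * norm v \<le> (\<Sum>w\<in>W. \<bar>v \<bullet> w\<bar>)"
    using span_lower_bound[OF fin] by blast
  define C1 where "C1 = real (card W) * \<bar>D\<bar> / m + norm (lnv x0)"
  define K where "K = C1 + 1"
  define Z where "Z = (\<Sum>i\<in>UNIV. x0$i * exp K)"
  have C1: "C1 \<ge> 0" unfolding C1_def using m by auto
  show ?thesis
  proof (intro exI[of _ "norm x0 + K * Z"] allI impI)
    fix x :: "real^'n"
    assume xp: "\<forall>i. x$i > 0"
      and cl: "\<forall>z. (\<forall>w\<in>W. z \<bullet> w = 0) \<longrightarrow> z \<bullet> (x - x0) = 0"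
      and lb: "\<forall>w\<in>W. \<bar>lnv x \<bullet> w\<bar> \<le> D"
    define w' where "w' = x - x0"
    obtain p q where pq: "p \<in> span W" "\<And>w. w \<in> span W \<Longrightarrow> orthogonal q w" "lnv x = p + q"
      using orthogonal_subspace_decomp_exists[of W "lnv x"] by metis
    have qw: "q \<bullet> w = 0" if "w \<in> W" for w using pq(2)[of w] that span_base by (auto simp: orthogonal_def)
    have pw: "p \<bullet> w = lnv x \<bullet> w" if "w \<in> W" for w using qw[OF that] pq(3) by (simp add: inner_add_left)
    have "m * norm p \<le> (\<Sum>w\<in>W. \<bar>p \<bullet> w\<bar>)" by (rule m(2)[OF pq(1)])
    also have "\<dots> \<le> (\<Sum>w\<in>W. \<bar>D\<bar>)" using lb pw by (intro sum_mono) force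
    finally have np: "norm p \<le> real (card W) * \<bar>D\<bar> / m" using m(1) by (simp add: field_simps)
    have "q \<bullet> w' = 0" unfolding w'_def using cl qw by blast
    hence "(lnv x - lnv x0) \<bullet> w' = p \<bullet> w' - lnv x0 \<bullet> w'" using pq(3) by (simp add: inner_add_left inner_diff_left)
    also have "\<dots> \<le> norm p * norm w' + norm (lnv x0) * norm w'"
      using Cauchy_Schwarz_ineq2[of p w'] Cauchy_Schwarz_ineq2[of "lnv x0" w'] by linarith
    also have "\<dots> \<le> C1 * norm w'"
    proof -
      have "norm p * norm w' \<le> (real (card W) * \<bar>D\<bar> / m) * norm w'" by (rule mult_right_mono[OF np norm_ge_zero])
      thus ?thesis unfolding C1_def by (simp add: distrib_right)
    qed
    also have "\<dots> \<le> C1 * (\<Sum>i\<in>UNIV. \<bar>w'$i\<bar>)" using C1 norm_le_l1_cart by (rule mult_left_mono[rotated])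
    finally have up: "(\<Sum>i\<in>UNIV. (ln (x$i) - ln (x0$i)) * w'$i) \<le> C1 * (\<Sum>i\<in>UNIV. \<bar>w'$i\<bar>)"
      by (simp add: inner_vec_def lnv_def)
    have lo: "(ln (x$i) - ln (x0$i)) * w'$i \<ge> K * \<bar>w'$i\<bar> - K * (x0$i * exp K)" for i
    proof (cases "x$i \<ge> x0$i * exp K")
      case True
      have x0i: "x0$i > 0" using x0 by blast
      have "ln (x0$i * exp K) = ln (x0$i) + K" using x0i by (simp add: ln_mult)
      moreover have "ln (x0$i * exp K) \<le> ln (x$i)" using True x0i xp by (subst ln_le_cancel_iff) auto
      ultimately have "ln (x$i) \<ge> ln (x0$i) + K" by simp
      moreover have "w'$i \<ge> 0"
      proof -
        have "exp K \<ge> 1" using K_def C1 by simp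
        hence "x0$i \<le> x0$i * exp K" using x0i by simp
        thus ?thesis unfolding w'_def using True by simp
      qed
      ultimately have "(ln (x$i) - ln (x0$i)) * w'$i \<ge> K * w'$i" by (simp add: mult_right_mono)
      moreover have "K * (x0$i * exp K) \<ge> 0" using K_def C1 x0i by simp
      ultimately show ?thesis using \<open>w'$i \<ge> 0\<close> by simp
    next
      case False
      have e1: "x0$i \<le> x0$i * exp K" using x0[rule_format, of i] K_def C1 by simp
      have wi: "w'$i = x$i - x0$i" by (simp add: w'_def)
      have "\<bar>w'$i\<bar> \<le> x0$i * exp K" unfolding abs_le_iff wi using False xp[rule_format, of i] e1 x0[rule_format, of i] by linarith
      hence "K * \<bar>w'$i\<bar> - K * (x0$i * exp K) \<le> 0" using K_def C1 by (simp add: mult_left_mono)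
      moreover have "(ln (x$i) - ln (x0$i)) * w'$i \<ge> 0"
      proof (cases "x$i \<le> x0$i")
        case True
        hence "ln (x$i) \<le> ln (x0$i)" using xp[rule_format, of i] by simp
        thus ?thesis unfolding wi using True by (intro mult_nonpos_nonpos) auto
      next
        case False
        hence "ln (x$i) \<ge> ln (x0$i)" using x0[rule_format, of i] by simp
        thus ?thesis unfolding wi using False by (intro mult_nonneg_nonneg) auto
      qed
      ultimately show ?thesis by linarith
    qed
    have "(\<Sum>i\<in>UNIV. K * \<bar>w'$i\<bar> - K * (x0$i * exp K)) \<le> (\<Sum>i\<in>UNIV. (ln (x$i) - ln (x0$i)) * w'$i)"
      by (intro sum_mono lo)
    hence "K * (\<Sum>i\<in>UNIV. \<bar>w'$i\<bar>) - K * Z \<le> C1 * (\<Sum>i\<in>UNIV. \<bar>w'$i\<bar>)"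
      using up by (simp add: sum_subtractf sum_distrib_left Z_def)
    hence S1: "(\<Sum>i\<in>UNIV. \<bar>w'$i\<bar>) \<le> K * Z" unfolding K_def by (simp add: algebra_simps)
    have "norm x \<le> norm x0 + norm w'" unfolding w'_def using norm_triangle_ineq[of x0 "x - x0"] by simp
    also have "\<dots> \<le> norm x0 + K * Z" using norm_le_l1_cart[of w'] S1 by simp
    finally show "norm x \<le> norm x0 + K * Z" .
  qed
qed



fun dseq :: "real \<Rightarrow> nat \<Rightarrow> real" where
  "dseq A 0 = 0"
| "dseq A (Suc k) = dseq A k + A * exp (dseq A k) * (dseq A k + 1) + 1"

lemma dseq_nonneg: "A \<ge> 0 \<Longrightarrow> dseq A k \<ge> 0"
  by (induction k) auto

lemma dseq_step: "A \<ge> 0 \<Longrightarrow> dseq A k \<le> dseq A (Suc k)"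
  using dseq_nonneg[of A k] by simp

lemma dseq_mono: assumes "A \<ge> 0" "j \<le> k" shows "dseq A j \<le> dseq A k"
  using assms(2)
proof (induction k)
  case 0 thus ?case by simp
next
  case (Suc k)
  show ?case
  proof (cases "j \<le> k")
    case True thus ?thesis using Suc dseq_step[OF assms(1), of k] by linarith
  next
    case False thus ?thesis using Suc by (simp add: le_Suc_eq)
  qed
qed

lemma exp_mul_le: fixes s M :: real shows "s \<ge> 0 \<Longrightarrow> exp (M - s) * s \<le> exp M"
proof -
  assume s: "s \<ge> 0"
  have "s \<le> exp s" using exp_ge_add_one_self[of s] by linarith
  hence "exp (M - s) * s \<le> exp (M - s) * exp s" by (intro mult_left_mono) auto
  also have "\<dots> = exp M" by (simp add: exp_add[symmetric])
  finally show ?thesis .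
qed

lemma gap_lemma:
  fixes C :: "'c set" and R :: "('c \<times> 'c) set" and a :: "'c \<Rightarrow> real" and \<eta> :: real
  assumes finC: "finite C" and finR: "finite R" and RC: "R \<subseteq> C \<times> C"
    and eta: "0 < \<eta>" "\<eta> < 1"
    and conn: "\<And>T y1 y2. T \<subseteq> C \<Longrightarrow> y1 \<in> T \<Longrightarrow> y2 \<in> C - T \<Longrightarrow> \<exists>r\<in>R. fst r \<in> T \<and> snd r \<in> C - T"
    and low: "ylow \<in> C" "a ylow < Max (a ` C) - dseq (real (card R) / \<eta>^2) (card C)"
  shows "(\<Sum>r\<in>R. max (\<eta> * (exp (a (fst r)) * (a (snd r) - a (fst r))))
                   ((exp (a (fst r)) * (a (snd r) - a (fst r))) / \<eta>)) < 0"
proof -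
  define A where "A = real (card R) / \<eta>^2"
  define d where "d = dseq A"
  define M where "M = Max (a ` C)"
  define g where "g r = exp (a (fst r)) * (a (snd r) - a (fst r))" for r
  define F where "F t = max (\<eta> * t) (t / \<eta>)" for t
  have A0: "A \<ge> 0" unfolding A_def by simp
  have d0: "d k \<ge> 0" for k unfolding d_def using dseq_nonneg[OF A0] .
  have dmono: "j \<le> k \<Longrightarrow> d j \<le> d k" for j k unfolding d_def using dseq_mono[OF A0] .
  have Cne: "C \<noteq> {}" using low by auto
  have aM: "y \<in> C \<Longrightarrow> a y \<le> M" for y unfolding M_def using finC by auto
  have "M \<in> a ` C" unfolding M_def using finC Cne by (intro Max_in) auto
  then obtain ystar where ys: "ystar \<in> C" "a ystar = M" by auto
  define m where "m = card C"
  have "\<exists>k<m. \<forall>y\<in>C. M - d k \<le> a y \<or> a y < M - d (Suc k)"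
  proof (rule ccontr)
    assume H: "\<not> ?thesis"
    hence wit: "\<exists>y\<in>C. M - d (Suc k) \<le> a y \<and> a y < M - d k" if "k < m" for k
    proof -
      from H that obtain y where "y \<in> C" "\<not> (M - d k \<le> a y \<or> a y < M - d (Suc k))" by blast
      thus ?thesis by (intro bexI[of _ y]) auto
    qed
    have "j \<le> m \<Longrightarrow> card {y\<in>C. M - d j \<le> a y} \<ge> j + 1" for j
    proof (induction j)
      case 0
      have "ystar \<in> {y\<in>C. M - d 0 \<le> a y}" using ys d0[of 0] by (simp add: d_def)
      hence "{y\<in>C. M - d 0 \<le> a y} \<noteq> {}" by blast
      moreover have "finite {y\<in>C. M - d 0 \<le> a y}" using finC by simp
      ultimately show ?case by (simp add: Suc_le_eq card_gt_0_iff)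
    next
      case (Suc j)
      obtain y where y: "y \<in> C" "M - d (Suc j) \<le> a y" "a y < M - d j" using wit[of j] Suc.prems by auto
      have "{y\<in>C. M - d j \<le> a y} \<subset> {y\<in>C. M - d (Suc j) \<le> a y}"
        using y dmono[of j "Suc j"] by force
      hence "card {y\<in>C. M - d j \<le> a y} < card {y\<in>C. M - d (Suc j) \<le> a y}"
        by (rule psubset_card_mono[rotated]) (use finC in simp)
      thus ?case using Suc by simp
    qed
    from this[of m] have "card {y\<in>C. M - d m \<le> a y} \<ge> m + 1" by simp
    moreover have "card {y\<in>C. M - d m \<le> a y} \<le> card C" using finC by (intro card_mono) auto
    ultimately show False unfolding m_def by simp
  qed
  then obtain k where k: "k < m" "\<And>y. y \<in> C \<Longrightarrow> M - d k \<le> a y \<or> a y < M - d (Suc k)" by blast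
  define T where "T = {y\<in>C. M - d k \<le> a y}"
  have "ystar \<in> T" unfolding T_def using ys d0[of k] by simp
  moreover have "ylow \<in> C - T" unfolding T_def using low dmono[of k m] k(1)
    by (auto simp: M_def d_def A_def m_def)
  ultimately obtain r0 where r0: "r0 \<in> R" "fst r0 \<in> T" "snd r0 \<in> C - T"
    using conn[of T] unfolding T_def by blast
  have a1: "a (fst r0) \<ge> M - d k" using r0 unfolding T_def by auto
  have a2: "a (snd r0) < M - d (Suc k)" using r0 k(2) unfolding T_def by auto
  have Sk: "d (Suc k) - d k = A * exp (d k) * (d k + 1) + 1" by (simp add: d_def)
  have g0: "g r0 \<le> - exp (M - d k) * (d (Suc k) - d k)"
  proof -
    have "a (snd r0) - a (fst r0) \<le> - (d (Suc k) - d k)" using a1 a2 by linarith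
    moreover have "exp (a (fst r0)) \<ge> exp (M - d k)" using a1 by simp
    moreover have "d (Suc k) - d k \<ge> 0" using dmono[of k "Suc k"] by simp
    ultimately have "exp (a (fst r0)) * (a (snd r0) - a (fst r0)) \<le> exp (M - d k) * (- (d (Suc k) - d k))"
      by (smt (verit, best) exp_gt_zero mult_left_mono mult_right_mono_neg)
    thus ?thesis unfolding g_def by (simp add: algebra_simps)
  qed
  have pos: "d (Suc k) - d k > 0"
  proof -
    have "A * exp (d k) * (d k + 1) \<ge> 0" using A0 d0[of k] by simp
    thus ?thesis unfolding Sk by linarith
  qed
  have "exp (M - d k) * (d (Suc k) - d k) > 0" using pos by simp
  hence g0neg: "g r0 < 0" using g0 by linarith
  have "1 * g r0 \<le> (\<eta> * \<eta>) * g r0"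
    using g0neg eta by (intro mult_right_mono_neg) (auto simp: mult_le_one)
  hence "g r0 / \<eta> \<le> \<eta> * g r0" using eta by (simp add: field_simps)
  hence F0: "F (g r0) = \<eta> * g r0" unfolding F_def by simp
  have gb: "g r \<le> exp M * (d k + 1)" if r: "r \<in> R" for r
  proof -
    have in1: "fst r \<in> C" "snd r \<in> C" using RC r by auto
    show ?thesis
    proof (cases "a (snd r) \<le> a (fst r)")
      case True
      hence "g r \<le> 0" unfolding g_def by (simp add: mult_nonneg_nonpos)
      also have "0 \<le> exp M * (d k + 1)" using d0[of k] by simp
      finally show ?thesis .
    next
      case False
      have "g r \<le> exp (a (fst r)) * (M - a (fst r))" unfolding g_def
        using aM[OF in1(2)] by (intro mult_left_mono) auto
      also have "\<dots> \<le> exp M * (d k + 1)"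
      proof (cases "M - d k \<le> a (fst r)")
        case True
        have "exp (a (fst r)) * (M - a (fst r)) \<le> exp M * d k"
          using True aM[OF in1(1)] d0[of k] by (intro mult_mono) auto
        moreover have "exp M > 0" by simp
        ultimately show ?thesis by (simp only: distrib_left mult_1_right)
      next
        case False
        have "exp (a (fst r)) * (M - a (fst r)) = exp (M - (M - a (fst r))) * (M - a (fst r))" by simp
        also have "\<dots> \<le> exp M" using aM[OF in1(1)] by (intro exp_mul_le) simp
        also have "\<dots> \<le> exp M * (d k + 1)" using d0[of k] by simp
        finally show ?thesis .
      qed
      finally show ?thesis .
    qed
  qed
  have Fb: "F (g r) \<le> exp M * (d k + 1) / \<eta>" if r: "r \<in> R" for r
  proof (cases "g r \<ge> 0")
    case True
    have "\<eta> * g r \<le> g r / \<eta>"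
    proof -
      have "\<eta> * \<eta> \<le> 1" using eta by (simp add: mult_le_one)
      hence "\<eta> * \<eta> * g r \<le> 1 * g r" using True by (intro mult_right_mono)
      hence "\<eta> * \<eta> * g r \<le> g r" by simp
      thus ?thesis using eta by (simp add: field_simps)
    qed
    hence "F (g r) = g r / \<eta>" unfolding F_def by simp
    also have "\<dots> \<le> exp M * (d k + 1) / \<eta>" using gb[OF r] eta by (simp add: divide_right_mono)
    finally show ?thesis .
  next
    case False
    hence "F (g r) \<le> 0" unfolding F_def using eta by (simp add: mult_nonneg_nonpos divide_nonpos_pos)
    also have "0 \<le> exp M * (d k + 1) / \<eta>" using d0[of k] eta by simp
    finally show ?thesis .
  qed
  have "(\<Sum>r\<in>R. F (g r)) = F (g r0) + (\<Sum>r\<in>R - {r0}. F (g r))"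
    using r0(1) finR by (simp add: sum.remove)
  also have "(\<Sum>r\<in>R - {r0}. F (g r)) \<le> (\<Sum>r\<in>R - {r0}. exp M * (d k + 1) / \<eta>)"
    using Fb by (intro sum_mono) auto
  also have "\<dots> \<le> real (card R) * (exp M * (d k + 1) / \<eta>)"
  proof -
    have "card (R - {r0}) \<le> card R" using finR by (simp add: card_mono)
    moreover have "exp M * (d k + 1) / \<eta> \<ge> 0" using d0[of k] eta by simp
    ultimately have "real (card (R - {r0})) * (exp M * (d k + 1) / \<eta>) \<le> real (card R) * (exp M * (d k + 1) / \<eta>)"
      by (intro mult_right_mono) auto
    thus ?thesis by simp
  qed
  finally have S: "(\<Sum>r\<in>R. F (g r)) \<le> \<eta> * g r0 + real (card R) * (exp M * (d k + 1) / \<eta>)"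
    using F0 by simp
  have e1: "\<eta> * g r0 \<le> - \<eta> * exp (M - d k) * (d (Suc k) - d k)"
  proof -
    have "\<eta> * g r0 \<le> \<eta> * (- exp (M - d k) * (d (Suc k) - d k))"
      using mult_left_mono[OF g0, of \<eta>] eta by simp
    thus ?thesis by simp
  qed
  have e2: "- \<eta> * exp (M - d k) * (d (Suc k) - d k) = - (\<eta> * A) * (exp (M - d k) * exp (d k)) * (d k + 1) - \<eta> * exp (M - d k)"
    unfolding Sk by (simp add: algebra_simps)
  have e3: "exp (M - d k) * exp (d k) = exp M" by (simp add: exp_add[symmetric])
  have e4: "\<eta> * A = real (card R) / \<eta>" unfolding A_def using eta by (simp add: power2_eq_square)
  have e5: "\<eta> * g r0 \<le> - (real (card R) / \<eta>) * exp M * (d k + 1) - \<eta> * exp (M - d k)"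
    using e1 unfolding e2 e3 e4 .
  have e6: "real (card R) * (exp M * (d k + 1) / \<eta>) = (real (card R) / \<eta>) * exp M * (d k + 1)"
    by simp
  have "(\<Sum>r\<in>R. F (g r)) \<le> - \<eta> * exp (M - d k)" using S e5 e6 by linarith
  also have "\<dots> < 0" using eta by simp
  finally show ?thesis unfolding F_def g_def .
qed



definition vr :: "'n::finite reaction \<Rightarrow> real^'n" where
  "vr r = cvec (snd r) - cvec (fst r)"

definition aterm :: "real^'n::finite \<Rightarrow> real^'n \<Rightarrow> 'n reaction \<Rightarrow> real" where
  "aterm p q r = monom p (fst r) * (lnv q \<bullet> vr r)"

definition Hf :: "real \<Rightarrow> 'n::finite reaction set \<Rightarrow> real^'n \<Rightarrow> real^'n \<Rightarrow> real" where
  "Hf \<eta> R p q = (\<Sum>r\<in>R. max (\<eta> * aterm p q r) (aterm p q r / \<eta>))"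

lemma monom_exp:
  assumes "\<forall>i. x$i > 0"
  shows "monom x y = exp (lnv x \<bullet> cvec y)"
proof -
  have "monom x y = (\<Prod>i\<in>UNIV. exp (real (y i) * ln (x$i)))"
    unfolding monom_def using assms by (intro prod.cong) (auto simp: exp_of_nat_mult)
  also have "\<dots> = exp (\<Sum>i\<in>UNIV. real (y i) * ln (x$i))" by (simp add: exp_sum)
  also have "(\<Sum>i\<in>UNIV. real (y i) * ln (x$i)) = lnv x \<bullet> cvec y"
    by (simp add: inner_vec_def lnv_def cvec_def mult.commute)
  finally show ?thesis .
qed

lemma cut_edge:
  assumes "(u, v) \<in> R\<^sup>*" "u \<in> T" "v \<notin> T"
  shows "\<exists>r\<in>R. fst r \<in> T \<and> snd r \<notin> T"
  using assms
proof (induction rule: rtrancl_induct)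
  case base thus ?case by simp
next
  case (step w v)
  show ?case
  proof (cases "w \<in> T")
    case True thus ?thesis using step by force
  next
    case False thus ?thesis using step by blast
  qed
qed

lemma lemmaA:
  fixes C :: "'n::finite complex set" and R :: "'n reaction set" and x0 :: "real^'n"
  assumes crn: "crn C R" and wr: "weakly_reversible C R" and sl: "single_linkage_class C R"
    and eta: "0 < \<eta>" "\<eta> < 1" and x0: "\<forall>i. x0$i > 0"
  shows "\<exists>B. \<forall>x. (\<forall>i. x$i > 0) \<longrightarrow> (\<forall>z. (\<forall>r\<in>R. z \<bullet> vr r = 0) \<longrightarrow> z \<bullet> (x - x0) = 0)
          \<longrightarrow> norm x > B \<longrightarrow> Hf \<eta> R x x < 0"
proof -
  have finC: "finite C" and finR: "finite R" and RC: "R \<subseteq> C \<times> C" using crn unfolding crn_def by auto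
  define D where "D = dseq (real (card R) / \<eta>^2) (card C)"
  obtain B where B: "\<And>x. (\<forall>i. x$i > 0) \<Longrightarrow> (\<forall>z. (\<forall>w\<in>vr ` R. z \<bullet> w = 0) \<longrightarrow> z \<bullet> (x - x0) = 0)
          \<Longrightarrow> (\<forall>w\<in>vr ` R. \<bar>lnv x \<bullet> w\<bar> \<le> D) \<Longrightarrow> norm x \<le> B"
    using birch_bound[OF finite_imageI[OF finR] x0, where D=D] by blast
  have conn: "\<exists>r\<in>R. fst r \<in> T \<and> snd r \<in> C - T" if hT: "T \<subseteq> C" "y1 \<in> T" "y2 \<in> C - T" for T y1 y2
  proof -
    have "(y1, y2) \<in> R\<^sup>*" using wr sl hT unfolding weakly_reversible_def single_linkage_class_def by blast
    then obtain r where "r \<in> R" "fst r \<in> T" "snd r \<notin> T" using cut_edge[of y1 y2 R T] hT by blast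
    thus ?thesis using RC by force
  qed
  show ?thesis
  proof (intro exI[of _ B] allI impI)
    fix x :: "real^'n"
    assume xp: "\<forall>i. x$i > 0" and cl: "\<forall>z. (\<forall>r\<in>R. z \<bullet> vr r = 0) \<longrightarrow> z \<bullet> (x - x0) = 0" and nb: "norm x > B"
    define a where "a y = lnv x \<bullet> cvec y" for y
    have "\<not> (\<forall>w\<in>vr ` R. \<bar>lnv x \<bullet> w\<bar> \<le> D)" using B[OF xp] cl nb by force
    then obtain r where r: "r \<in> R" "\<bar>a (snd r) - a (fst r)\<bar> > D"
      by (auto simp: a_def vr_def inner_diff_right)
    have inC: "fst r \<in> C" "snd r \<in> C" using r RC by auto
    define M where "M = Max (a ` C)"
    have le: "a y \<le> M" if "y \<in> C" for y unfolding M_def using finC that by auto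
    obtain ylow where yl: "ylow \<in> C" "a ylow < M - D"
    proof (cases "a (snd r) \<le> a (fst r)")
      case True
      thus ?thesis using that[of "snd r"] r(2) le[OF inC(1)] inC by auto
    next
      case False
      thus ?thesis using that[of "fst r"] r(2) le[OF inC(2)] inC by auto
    qed
    have "(\<Sum>r\<in>R. max (\<eta> * (exp (a (fst r)) * (a (snd r) - a (fst r))))
                   ((exp (a (fst r)) * (a (snd r) - a (fst r))) / \<eta>)) < 0"
      by (rule gap_lemma[OF finC finR RC eta conn yl(1)]) (use yl(2) in \<open>auto simp: M_def D_def\<close>)
    moreover have "aterm x x r = exp (a (fst r)) * (a (snd r) - a (fst r))" for r
      unfolding aterm_def monom_exp[OF xp] a_def vr_def by (simp add: inner_diff_right)
    ultimately show "Hf \<eta> R x x < 0" unfolding Hf_def by simp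
  qed
qed



lemma sol_sub:
  assumes sol: "is_solution R \<kappa> x0 x" and uv: "0 \<le> u" "u \<le> v"
  shows "((\<lambda>s. mak_rhs R \<kappa> s (x s)) has_integral (x v - x u)) {u..v}"
proof -
  let ?f = "\<lambda>s. mak_rhs R \<kappa> s (x s)"
  have iv: "(?f has_integral (x v - x0)) {0..v}" and iu: "(?f has_integral (x u - x0)) {0..u}"
    using sol uv unfolding is_solution_def by auto
  have intv: "?f integrable_on {0..v}" using iv by blast
  have intuv: "?f integrable_on {u..v}" using integrable_subinterval_real[OF intv] uv by auto
  have "integral {0..v} ?f = integral {0..u} ?f + integral {u..v} ?f"
    using Henstock_Kurzweil_Integration.integral_combine[OF uv(1) uv(2) intv] by simp
  moreover have "integral {0..v} ?f = x v - x0" "integral {0..u} ?f = x u - x0"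
    using iv iu by (auto intro: integral_unique)
  ultimately have "integral {u..v} ?f = x v - x u" by (simp add: algebra_simps)
  thus ?thesis using intuv by (metis has_integral_integral)
qed

lemma has_integral_inner_const:
  assumes "(f has_integral y) S"
  shows "((\<lambda>s. q \<bullet> f s) has_integral (q \<bullet> y)) S"
  using has_integral_linear[OF assms bounded_linear_inner_right[of q]] by (simp add: o_def)

lemma rhs_inner:
  "q \<bullet> mak_rhs R \<kappa> t p = (\<Sum>r\<in>R. \<kappa> r t * monom p (fst r) * (q \<bullet> vr r))"
  unfolding mak_rhs_def vr_def by (simp add: inner_sum_right)

lemma class_inv:
  assumes sol: "is_solution R \<kappa> x0 x" and t: "t \<ge> 0" and z: "\<forall>r\<in>R. z \<bullet> vr r = 0"
  shows "z \<bullet> (x t - x0) = 0"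
proof -
  have "((\<lambda>s. z \<bullet> mak_rhs R \<kappa> s (x s)) has_integral (z \<bullet> (x t - x 0))) {0..t}"
    by (rule has_integral_inner_const[OF sol_sub[OF sol order_refl t]])
  moreover have "(\<lambda>s. z \<bullet> mak_rhs R \<kappa> s (x s)) = (\<lambda>s. 0)"
    using z by (simp add: rhs_inner)
  ultimately have "((\<lambda>s. 0) has_integral (z \<bullet> (x t - x 0))) {0..t}" by simp
  hence "z \<bullet> (x t - x 0) = 0" using has_integral_0 has_integral_unique by blast
  thus ?thesis using sol unfolding is_solution_def by simp
qed



lemma monom_split:
  assumes "y i \<ge> 1"
  shows "monom p y = p$i * monom p (y(i := y i - 1))"
proof -
  have rem: "monom p y' = p$i ^ (y' i) * (\<Prod>j\<in>UNIV - {i}. p$j ^ y' j)" for y'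
    unfolding monom_def by (rule prod.remove) auto
  have "(\<Prod>j\<in>UNIV - {i}. p$j ^ ((y(i := y i - 1)) j)) = (\<Prod>j\<in>UNIV - {i}. p$j ^ y j)"
    by (intro prod.cong) auto
  moreover have "p$i ^ y i = p$i * p$i ^ (y i - 1)" using assms
    by (metis Suc_diff_le diff_Suc_1 power_Suc)
  ultimately show ?thesis using rem[of y] rem[of "y(i := y i - 1)"] by simp
qed

lemma monom_nonneg: "(\<forall>j. p$j \<ge> 0) \<Longrightarrow> monom p y \<ge> 0"
  unfolding monom_def by (intro prod_nonneg) auto

lemma cont_monom: "continuous_on S x \<Longrightarrow> continuous_on S (\<lambda>t. monom (x t) y)"
  unfolding monom_def by (intro continuous_intros)

lemma closed_ge_on:
  fixes g :: "real \<Rightarrow> real"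
  assumes "continuous_on {a..b} g" "a < b" "\<And>t. t \<in> {a..<b} \<Longrightarrow> c \<le> g t"
  shows "c \<le> g b"
proof -
  have cl: "closed {t \<in> {a..b}. (\<lambda>_. c) t \<le> g t}"
    by (rule continuous_on_closed_Collect_le) (use assms in \<open>auto intro: continuous_intros\<close>)
  have "{a..<b} \<subseteq> {t \<in> {a..b}. (\<lambda>_. c) t \<le> g t}" using assms(3) by auto
  hence "closure {a..<b} \<subseteq> {t \<in> {a..b}. (\<lambda>_. c) t \<le> g t}" using cl by (rule closure_minimal)
  moreover have "b \<in> closure {a..<b}" using assms(2) by simp
  ultimately show ?thesis by blast
qed

lemma positivity:
  fixes R :: "'n::finite reaction set"
  assumes sol: "is_solution R \<kappa> x0 x" and finR: "finite R"
    and eta: "\<eta> > 0" and kb: "\<And>r t. r \<in> R \<Longrightarrow> t \<ge> 0 \<Longrightarrow> \<eta> < \<kappa> r t \<and> \<kappa> r t < 1 / \<eta>"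
    and x0: "\<forall>i. x0$i > 0"
  shows "\<forall>t\<ge>0. \<forall>i. x t $ i > 0"
proof (rule ccontr)
  assume "\<not> ?thesis"
  then obtain t1 i1 where t1: "t1 \<ge> 0" "x t1 $ i1 \<le> 0" by (auto simp: not_less)
  have xcont: "continuous_on {0..} x" and xx0: "x 0 = x0" using sol unfolding is_solution_def by auto
  have xc: "continuous_on {0..b} x" for b using continuous_on_subset[OF xcont] by auto
  define Z where "Z = {\<tau>\<in>{0..t1}. \<exists>i. x \<tau> $ i \<le> 0}"
  have Zeq: "Z = (\<Union>i. {\<tau>\<in>{0..t1}. (\<lambda>\<tau>. x \<tau> $ i) \<tau> \<le> (\<lambda>_. 0) \<tau>})" unfolding Z_def by auto
  have "closed Z" unfolding Zeq
    by (intro closed_Union finite_imageI finite ballI, clarify, rule continuous_on_closed_Collect_le)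
       (auto intro!: continuous_intros xc)
  moreover have "t1 \<in> Z" using t1 unfolding Z_def by auto
  moreover have bb: "bdd_below Z" unfolding Z_def by (auto intro: bdd_belowI[of _ 0])
  ultimately have tsZ: "Inf Z \<in> Z" by (intro closed_contains_Inf) auto
  define ts where "ts = Inf Z"
  have ts0: "ts \<ge> 0" "ts \<le> t1" using tsZ unfolding ts_def Z_def by auto
  have before: "x \<tau> $ j > 0" if "0 \<le> \<tau>" "\<tau> < ts" for \<tau> j
  proof (rule ccontr)
    assume "\<not> x \<tau> $ j > 0"
    hence "\<tau> \<in> Z" using that ts0 unfolding Z_def by (auto simp: not_less)
    hence "ts \<le> \<tau>" unfolding ts_def using bb by (metis cInf_lower)
    thus False using that by simp
  qed
  obtain i where i: "x ts $ i \<le> 0" using tsZ unfolding ts_def Z_def by auto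
  have tspos: "ts > 0"
  proof (rule ccontr)
    assume "\<not> ts > 0" hence "ts = 0" using ts0 by simp
    hence "x 0 $ i \<le> 0" using i by simp
    thus False using xx0 x0 by (metis not_less)
  qed
  define yr where "yr r = (fst r)(i := fst r i - 1)" for r :: "'n reaction"
  define G where "G \<tau> = (\<Sum>r\<in>R. \<bar>monom (x \<tau>) (yr r)\<bar>)" for \<tau>
  have Gc: "continuous_on {0..ts} G" unfolding G_def
    by (intro continuous_intros cont_monom xc)
  obtain tm where tm: "tm \<in> {0..ts}" "\<And>\<tau>. \<tau> \<in> {0..ts} \<Longrightarrow> G \<tau> \<le> G tm"
    using continuous_attains_sup[OF compact_Icc _ Gc] ts0 by auto
  define Q where "Q = G tm"
  have Qb: "\<bar>monom (x \<tau>) (yr r)\<bar> \<le> Q" if "\<tau> \<in> {0..ts}" "r \<in> R" for \<tau> r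
  proof -
    have "\<bar>monom (x \<tau>) (yr r)\<bar> \<le> G \<tau>" unfolding G_def using finR that(2)
      by (intro member_le_sum) auto
    thus ?thesis using tm(2)[OF that(1)] Q_def by simp
  qed
  have Q0: "Q \<ge> 0" unfolding Q_def G_def by (intro sum_nonneg) auto
  define K' where "K' = (\<Sum>r\<in>R. (1/\<eta>) * Q * real (fst r i))"
  have K'0: "K' \<ge> 0" unfolding K'_def using eta Q0 by (intro sum_nonneg) auto
  define fi where "fi \<tau> = axis i 1 \<bullet> mak_rhs R \<kappa> \<tau> (x \<tau>)" for \<tau>
  have fi_lb: "fi \<tau> \<ge> - K' * x \<tau> $ i" if "0 \<le> \<tau>" "\<tau> < ts" for \<tau>
  proof -
    have xpos: "\<forall>j. x \<tau> $ j > 0" using before that by auto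
    have "fi \<tau> = (\<Sum>r\<in>R. \<kappa> r \<tau> * monom (x \<tau>) (fst r) * (real (snd r i) - real (fst r i)))"
      unfolding fi_def rhs_inner by (simp add: vr_def inner_axis' cvec_def)
    also have "\<dots> \<ge> (\<Sum>r\<in>R. - ((1/\<eta>) * Q * real (fst r i) * x \<tau> $ i))"
    proof (rule sum_mono)
      fix r assume r: "r \<in> R"
      have kr: "\<eta> < \<kappa> r \<tau>" "\<kappa> r \<tau> < 1/\<eta>" using kb[OF r that(1)] by auto
      have xti: "x \<tau> $ i \<ge> 0" using xpos less_imp_le by blast
      have rhs0: "(1/\<eta>) * Q * real (fst r i) * x \<tau> $ i \<ge> 0" using eta Q0 xti by (intro mult_nonneg_nonneg) auto
      show "- ((1/\<eta>) * Q * real (fst r i) * x \<tau> $ i) \<le> \<kappa> r \<tau> * monom (x \<tau>) (fst r) * (real (snd r i) - real (fst r i))"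
      proof (cases "snd r i \<ge> fst r i")
        case True
        have "0 \<le> \<kappa> r \<tau> * monom (x \<tau>) (fst r) * (real (snd r i) - real (fst r i))"
          using kr eta True monom_nonneg[of "x \<tau>"] xpos by (auto intro!: mult_nonneg_nonneg simp: less_imp_le)
        thus ?thesis using rhs0 by linarith
      next
        case False
        hence ge1: "fst r i \<ge> 1" by simp
        have ms: "monom (x \<tau>) (fst r) = x \<tau> $ i * monom (x \<tau>) (yr r)"
          unfolding yr_def by (rule monom_split[where y="fst r" and i=i, OF ge1])
        have m0: "monom (x \<tau>) (yr r) \<ge> 0" using monom_nonneg[of "x \<tau>"] xpos by (simp add: less_imp_le)
        have mQ: "monom (x \<tau>) (yr r) \<le> Q" using Qb[of \<tau> r] that r by auto
        have dd: "real (fst r i) - real (snd r i) \<le> real (fst r i)" "real (fst r i) - real (snd r i) \<ge> 0"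
          using False by auto
        have "\<kappa> r \<tau> * (monom (x \<tau>) (yr r) * (real (fst r i) - real (snd r i))) \<le> (1/\<eta>) * (Q * real (fst r i))"
          using kr m0 mQ dd eta by (intro mult_mono) (auto intro!: mult_nonneg_nonneg)
        hence "\<kappa> r \<tau> * (monom (x \<tau>) (yr r) * (real (fst r i) - real (snd r i))) * x \<tau> $ i \<le> (1/\<eta>) * (Q * real (fst r i)) * x \<tau> $ i"
          using xpos by (intro mult_right_mono) (auto simp: less_imp_le)
        thus ?thesis unfolding ms by (simp add: algebra_simps)
      qed
    qed
    also have "(\<Sum>r\<in>R. - ((1/\<eta>) * Q * real (fst r i) * x \<tau> $ i)) = - K' * x \<tau> $ i"
      unfolding K'_def by (simp add: sum_negf sum_distrib_right)
    finally show ?thesis .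
  qed
  define K where "K = 6 * K' + 1"
  have K1: "K \<ge> 1" unfolding K_def using K'0 by simp
  define c0 where "c0 = x0 $ i * exp (- K * ts)"
  have c0: "c0 > 0" unfolding c0_def using x0 by simp
  have lowb: "c0 \<le> x T $ i" if T: "T \<in> {0..<ts}" for T
  proof -
    define h where "h \<tau> = - (exp (K * \<tau>) * x \<tau> $ i)" for \<tau>
    have "h T \<le> h 0"
    proof (rule local_to_global_mono[of 0 T h])
      show "0 \<le> T" using T by simp
      fix c assume c: "c \<in> {0..T}"
      have xcpos: "x c $ i > 0" using before c T by auto
      have "continuous_on {0..} (\<lambda>\<tau>. x \<tau> $ i)" by (intro continuous_intros xcont)
      hence "continuous (at c within {0..}) (\<lambda>\<tau>. x \<tau> $ i)" using c
        by (simp add: continuous_on_eq_continuous_within)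
      then obtain d1 where d1: "d1 > 0" "\<And>\<tau>. \<tau> \<in> {0..} \<Longrightarrow> dist \<tau> c < d1 \<Longrightarrow> dist (x \<tau> $ i) (x c $ i) < x c $ i / 2"
        unfolding continuous_within_eps_delta using xcpos by (metis half_gt_zero)
      define d where "d = min d1 (ln 2 / K)"
      have d: "d > 0" unfolding d_def using d1 K1 by simp
      show "\<exists>d>0. \<forall>u v. u \<in> {0..T} \<and> v \<in> {0..T} \<and> u \<le> c \<and> c \<le> v \<and> v - u < d \<longrightarrow> h v \<le> h u"
      proof (intro exI[of _ d] conjI d allI impI, elim conjE)
        fix u v assume u: "u \<in> {0..T}" and v: "v \<in> {0..T}" and uc: "u \<le> c" and cv: "c \<le> v" and uvd: "v - u < d"
        have near: "x c $ i / 2 < x \<tau> $ i \<and> x \<tau> $ i < 3 * x c $ i / 2" if "\<tau> \<in> {u..v}" for \<tau>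
        proof -
          have "dist \<tau> c < d1" using that uc cv uvd unfolding d_def dist_real_def by auto
          moreover have "\<tau> \<in> {0..}" using that u by auto
          ultimately have "dist (x \<tau> $ i) (x c $ i) < x c $ i / 2" using d1(2) by blast
          thus ?thesis unfolding dist_real_def abs_less_iff by linarith
        qed
        have xu: "x c $ i / 2 < x u $ i" using near[of u] uc cv by auto
        have int: "((\<lambda>\<tau>. fi \<tau>) has_integral (x v $ i - x u $ i)) {u..v}"
          using has_integral_inner_const[OF sol_sub[OF sol _ order_trans[OF uc cv]], of "axis i 1"] u
          unfolding fi_def by (simp add: inner_axis')
        have cint: "((\<lambda>\<tau>. - 3 * K' * x u $ i) has_integral ((v - u) * (- 3 * K' * x u $ i))) {u..v}"
          using has_integral_const_real[of "- 3 * K' * x u $ i" u v] uc cv by simp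
        have "(v - u) * (- 3 * K' * x u $ i) \<le> x v $ i - x u $ i"
        proof (rule has_integral_le[OF cint int])
          fix \<tau> assume tau: "\<tau> \<in> {u..v}"
          have "0 \<le> \<tau>" "\<tau> < ts" using tau u v T by auto
          hence "fi \<tau> \<ge> - K' * x \<tau> $ i" by (rule fi_lb)
          moreover have "x \<tau> $ i \<le> 3 * x u $ i" using near[OF tau] xu by linarith
          moreover have "K' * x \<tau> $ i \<le> K' * (3 * x u $ i)"
            using K'0 \<open>x \<tau> $ i \<le> 3 * x u $ i\<close> by (rule mult_left_mono[rotated])
          ultimately show "- 3 * K' * x u $ i \<le> fi \<tau>" by simp
        qed
        hence diff: "x v $ i \<ge> x u $ i - 3 * K' * (v - u) * x u $ i" by (simp add: algebra_simps)
        define E where "E = exp (K * (v - u))"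
        have vu0: "v - u \<ge> 0" using uc cv by simp
        have E1: "E \<ge> 1 + K * (v - u)" unfolding E_def by (rule exp_ge_add_one_self)
        have "K * (v - u) \<le> ln 2"
        proof -
          have "v - u \<le> ln 2 / K" using uvd unfolding d_def by simp
          thus ?thesis using K1 by (simp add: field_simps)
        qed
        hence E2: "E \<le> 2" unfolding E_def by (metis exp_ln exp_le_cancel_iff zero_less_numeral)
        have ev: "exp (K * v) = exp (K * u) * E" unfolding E_def by (simp add: exp_add[symmetric] algebra_simps)
        have xu0: "x u $ i > 0" using xu xcpos by linarith
        have "E * (1 - 3 * K' * (v - u)) \<ge> 1"
        proof -
          have "(3 * K' * (v - u)) * E \<le> (3 * K' * (v - u)) * 2" using E2 K'0 vu0
            by (intro mult_left_mono) auto
          hence a: "3 * K' * (v - u) * E \<le> 6 * K' * (v - u)" by simp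
          have "E * (1 - 3 * K' * (v - u)) = E - 3 * K' * (v - u) * E" by (simp add: algebra_simps)
          also have "\<dots> \<ge> 1 + K * (v - u) - 6 * K' * (v - u)" using a E1 by linarith
          also have "1 + K * (v - u) - 6 * K' * (v - u) = 1 + (v - u)" unfolding K_def by (simp add: algebra_simps)
          finally show ?thesis using vu0 by linarith
        qed
        hence "1 * x u $ i \<le> (E * (1 - 3 * K' * (v - u))) * x u $ i"
          using xu0 by (intro mult_right_mono) auto
        hence "x u $ i \<le> E * ((1 - 3 * K' * (v - u)) * x u $ i)" by (simp add: mult.assoc)
        also have "\<dots> \<le> E * x v $ i"
        proof (rule mult_left_mono)
          show "(1 - 3 * K' * (v - u)) * x u $ i \<le> x v $ i" using diff by (simp add: algebra_simps)
          show "0 \<le> E" unfolding E_def by simp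
        qed
        finally have "x u $ i \<le> E * x v $ i" .
        hence "exp (K * u) * x u $ i \<le> exp (K * u) * (E * x v $ i)" by simp
        thus "h v \<le> h u" unfolding h_def ev by (simp add: algebra_simps)
      qed
    qed
    hence "x0 $ i \<le> exp (K * T) * x T $ i" unfolding h_def using xx0 by simp
    hence "x0 $ i * exp (- K * T) \<le> x T $ i" by (simp add: exp_minus field_simps)
    moreover have "x0 $ i * exp (- K * ts) \<le> x0 $ i * exp (- K * T)" using T K1 x0 by simp
    ultimately show ?thesis unfolding c0_def by linarith
  qed
  have "c0 \<le> x ts $ i"
    by (rule closed_ge_on[OF _ tspos]) (use lowb in \<open>auto intro!: continuous_intros xc\<close>)
  thus False using i c0 by simp
qed



definition Vf :: "real^'n::finite \<Rightarrow> real" where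
  "Vf p = (\<Sum>i\<in>UNIV. p$i * ln (p$i) - p$i)"

lemma V_conv:
  assumes p: "\<forall>i. p$i > 0" and q: "\<forall>i. q$i > 0"
  shows "Vf q - Vf p \<le> lnv q \<bullet> (q - p)"
proof -
  have "q$i * ln (q$i) - q$i - (p$i * ln (p$i) - p$i) \<le> ln (q$i) * (q$i - p$i)" for i
  proof -
    have pi: "p$i > 0" and qi: "q$i > 0" using p q by auto
    have "ln (q$i / p$i) \<le> q$i / p$i - 1" using pi qi by (intro ln_le_minus_one) auto
    hence "p$i * ln (q$i / p$i) \<le> p$i * (q$i / p$i - 1)" using pi by (intro mult_left_mono) auto
    moreover have "p$i * (q$i / p$i - 1) = q$i - p$i" using pi by (simp add: field_simps)
    moreover have "ln (q$i / p$i) = ln (q$i) - ln (p$i)" using pi qi by (simp add: ln_div)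
    ultimately have "p$i * ln (q$i) - p$i * ln (p$i) \<le> q$i - p$i" by (simp add: algebra_simps)
    thus ?thesis by (simp add: algebra_simps)
  qed
  hence "Vf q - Vf p \<le> (\<Sum>i\<in>UNIV. ln (q$i) * (q$i - p$i))"
    unfolding Vf_def sum_subtractf[symmetric] by (intro sum_mono) auto
  thus ?thesis by (simp add: inner_vec_def lnv_def)
qed

lemma V_upper:
  fixes p :: "real^'n::finite"
  assumes p: "\<forall>i. p$i > 0" and nb: "norm p \<le> B"
  shows "Vf p \<le> real CARD('n) * B^2"
proof -
  have "p$i * ln (p$i) - p$i \<le> B^2" for i
  proof -
    have pi: "p$i > 0" using p by auto
    have "ln (p$i) \<le> p$i - 1" using pi by (rule ln_le_minus_one)
    hence "p$i * ln (p$i) \<le> p$i * (p$i - 1)" using pi by (intro mult_left_mono) auto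
    moreover have "p$i \<le> B" using component_le_norm_cart[of p i] nb pi by auto
    hence "p$i * p$i \<le> B * B" using pi by (intro mult_mono) auto
    ultimately have "p$i * ln (p$i) - p$i \<le> B * B" using pi by (simp add: algebra_simps)
    thus ?thesis by (simp add: power2_eq_square)
  qed
  hence "Vf p \<le> (\<Sum>i\<in>(UNIV::'n set). B^2)" unfolding Vf_def by (intro sum_mono) auto
  thus ?thesis by simp
qed

lemma V_term_lower: "t > 0 \<Longrightarrow> t * ln t - t \<ge> -1" for t :: real
proof -
  assume t: "t > 0"
  have "ln (1/t) \<le> 1/t - 1" using t by (intro ln_le_minus_one) auto
  hence "- ln t \<le> 1/t - 1" using t by (simp add: ln_div)
  hence "t * (- ln t) \<le> t * (1/t - 1)" using t by (intro mult_left_mono) auto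
  thus ?thesis using t by (simp add: algebra_simps)
qed

lemma V_lower:
  fixes p :: "real^'n::finite"
  assumes p: "\<forall>i. p$i > 0"
  shows "norm p \<le> real CARD('n) * max (exp 2) (Vf p + real CARD('n))"
proof -
  have ci: "p$i \<le> max (exp 2) (Vf p + real CARD('n))" for i
  proof (cases "p$i \<ge> exp 2")
    case False thus ?thesis by simp
  next
    case True
    have pi: "p$i > 0" using p by auto
    have "ln (p$i) \<ge> 2" using True pi by (metis ln_exp ln_le_cancel_iff exp_gt_zero)
    hence "p$i * ln (p$i) \<ge> p$i * 2" using pi by (intro mult_left_mono) auto
    hence ti: "p$i * ln (p$i) - p$i \<ge> p$i" by simp
    have "Vf p = (p$i * ln (p$i) - p$i) + (\<Sum>j\<in>UNIV - {i}. p$j * ln (p$j) - p$j)"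
      unfolding Vf_def by (rule sum.remove) auto
    moreover have "(\<Sum>j\<in>UNIV - {i}. p$j * ln (p$j) - p$j) \<ge> (\<Sum>j\<in>UNIV - {i}. (-1::real))"
      using p V_term_lower by (intro sum_mono) auto
    moreover have "(\<Sum>j\<in>(UNIV::'n set) - {i}. (-1::real)) \<ge> - real CARD('n)"
      by (simp add: card_Diff_subset)
    ultimately have "Vf p \<ge> p$i - real CARD('n)" using ti by linarith
    thus ?thesis by simp
  qed
  have "norm p \<le> (\<Sum>i\<in>UNIV. \<bar>p$i\<bar>)" by (rule norm_le_l1_cart)
  also have "\<dots> \<le> (\<Sum>i\<in>(UNIV::'n set). max (exp 2) (Vf p + real CARD('n)))"
    using ci p by (intro sum_mono) (simp add: less_imp_le)
  finally show ?thesis by simp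
qed

lemma kappa_max: fixes \<eta> k a :: real shows "\<eta> < k \<Longrightarrow> k < 1/\<eta> \<Longrightarrow> \<eta> > 0 \<Longrightarrow> k * a \<le> max (\<eta> * a) (a / \<eta>)"
proof -
  assume h: "\<eta> < k" "k < 1/\<eta>" "\<eta> > 0"
  show ?thesis
  proof (cases "a \<ge> 0")
    case True
    have "k * a \<le> (1/\<eta>) * a" by (rule mult_right_mono) (use h True in auto)
    thus ?thesis by simp
  next
    case False
    hence "k * a \<le> \<eta> * a" using h by (intro mult_right_mono_neg) auto
    thus ?thesis by simp
  qed
qed

lemma Hf_cont:
  fixes R :: "'n::finite reaction set"
  assumes q: "\<forall>i. q$i > 0" and eta: "\<eta> > 0"
  shows "isCont (\<lambda>z. Hf \<eta> R (fst z) (snd z)) (p, q)"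
proof -
  have eq: "(\<lambda>z. Hf \<eta> R (fst z) (snd z)) = (\<lambda>z. \<Sum>r\<in>R. max (\<eta> * ((\<Prod>i\<in>UNIV. (fst z $ i) ^ (fst r i)) * (\<Sum>i\<in>UNIV. ln (snd z $ i) * (vr r $ i))))
      (((\<Prod>i\<in>UNIV. (fst z $ i) ^ (fst r i)) * (\<Sum>i\<in>UNIV. ln (snd z $ i) * (vr r $ i))) / \<eta>))"
    by (simp add: Hf_def aterm_def monom_def lnv_def inner_vec_def)
  have qne: "q$i \<noteq> 0" for i using q by (metis less_irrefl)
  show ?thesis unfolding eq
    using qne eta by (intro continuous_intros) auto
qed

lemma closed_ge_on_left:
  fixes g :: "real \<Rightarrow> real"
  assumes "continuous_on {a..b} g" "a < b" "\<And>t. t \<in> {a<..b} \<Longrightarrow> c \<le> g t"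
  shows "c \<le> g a"
proof -
  have cl: "closed {t \<in> {a..b}. (\<lambda>_. c) t \<le> g t}"
    by (rule continuous_on_closed_Collect_le) (use assms in \<open>auto intro: continuous_intros\<close>)
  have "{a<..b} \<subseteq> {t \<in> {a..b}. (\<lambda>_. c) t \<le> g t}" using assms(3) by auto
  hence "closure {a<..b} \<subseteq> {t \<in> {a..b}. (\<lambda>_. c) t \<le> g t}" using cl by (rule closure_minimal)
  moreover have "a \<in> closure {a<..b}" using assms(2) by simp
  ultimately show ?thesis by blast
qed



theorem mainTheorem6:
  fixes C :: "'n::finite complex set" and R :: "'n reaction set"
    and \<kappa> :: "'n reaction \<Rightarrow> real \<Rightarrow> real"
    and x0 :: "real^'n" and x :: "real \<Rightarrow> real^'n"
  assumes "crn C R"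
    and "weakly_reversible C R"
    and "single_linkage_class C R"
    and "bounded_kinetics R \<kappa>"
    and "\<forall>i. x0 $ i > 0"
    and "is_solution R \<kappa> x0 x"
  shows "\<exists>B. \<forall>\<^sub>F t in at_top. norm (x t) \<le> B"
proof -
  note crn = assms(1) and wr = assms(2) and sl = assms(3) and x0 = assms(5) and sol = assms(6)
  have finR: "finite R" using crn unfolding crn_def by auto
  obtain \<eta>0 where eta0: "\<eta>0 > 0" "\<forall>r\<in>R. \<forall>t\<ge>0. \<eta>0 < \<kappa> r t \<and> \<kappa> r t < 1 / \<eta>0"
    using assms(4) unfolding bounded_kinetics_def by blast
  define \<eta> where "\<eta> = min \<eta>0 (1/2)"
  have eta: "0 < \<eta>" "\<eta> < 1" unfolding \<eta>_def using eta0 by auto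
  have kb: "\<eta> < \<kappa> r t \<and> \<kappa> r t < 1 / \<eta>" if "r \<in> R" "t \<ge> 0" for r t
  proof -
    have "\<eta>0 < \<kappa> r t" "\<kappa> r t < 1 / \<eta>0" using eta0 that by auto
    moreover have "\<eta> \<le> \<eta>0" unfolding \<eta>_def by simp
    moreover have "1 / \<eta>0 \<le> 1 / \<eta>" using eta \<open>\<eta> \<le> \<eta>0\<close> by (simp add: frac_le)
    ultimately show ?thesis by linarith
  qed
  have pos: "\<forall>t\<ge>0. \<forall>i. x t $ i > 0" by (rule positivity[OF sol finR eta(1) kb x0])
  have xcont: "continuous_on {0..} x" and xx0: "x 0 = x0" using sol unfolding is_solution_def by auto
  have cls: "\<forall>z. (\<forall>r\<in>R. z \<bullet> vr r = 0) \<longrightarrow> z \<bullet> (x t - x0) = 0" if "t \<ge> 0" for t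
    using class_inv[OF sol that] by blast
  obtain B where B: "\<And>p. (\<forall>i. p$i > 0) \<Longrightarrow> (\<forall>z. (\<forall>r\<in>R. z \<bullet> vr r = 0) \<longrightarrow> z \<bullet> (p - x0) = 0)
          \<Longrightarrow> norm p > B \<Longrightarrow> Hf \<eta> R p p < 0"
    using lemmaA[OF crn wr sl eta x0] by blast
  define L where "L = max (real CARD('n) * B^2) (Vf x0) + 1"
  have Vc: "continuous_on {a..b} (\<lambda>\<tau>. Vf (x \<tau>))" if "0 \<le> a" for a b
  proof -
    have xc: "continuous_on {a..b} x" using continuous_on_subset[OF xcont] that by auto
    have ne: "\<forall>\<tau>\<in>{a..b}. x \<tau> $ i \<noteq> 0" for i using pos that by (metis atLeastAtMost_iff less_irrefl order_trans)
    show ?thesis unfolding Vf_def by (intro continuous_intros xc ne)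
  qed
  have VL: "Vf (x t) \<le> L" if t: "t \<ge> 0" for t
  proof (rule ccontr)
    assume "\<not> Vf (x t) \<le> L"
    hence Vt: "Vf (x t) > L" by simp
    define A where "A = {\<tau> \<in> {0..t}. Vf (x \<tau>) \<le> (\<lambda>_. L) \<tau>}"
    have clA: "closed A" unfolding A_def
      by (rule continuous_on_closed_Collect_le) (auto intro: Vc continuous_intros)
    have "0 \<in> A" unfolding A_def L_def using t xx0 by auto
    hence Ane: "A \<noteq> {}" by blast
    have bA: "bdd_above A" unfolding A_def by (auto intro: bdd_aboveI[of _ t])
    define s where "s = Sup A"
    have sA: "s \<in> A" unfolding s_def by (rule closed_contains_Sup[OF Ane bA clA])
    have s0: "0 \<le> s" "s \<le> t" using sA unfolding A_def by auto
    have st: "s < t" using sA Vt s0 unfolding A_def by (cases "s = t") auto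
    have after: "Vf (x \<tau>) > L" if "\<tau> \<in> {s<..t}" for \<tau>
    proof (rule ccontr)
      assume "\<not> Vf (x \<tau>) > L"
      hence "\<tau> \<in> A" unfolding A_def using that s0 by auto
      hence "\<tau> \<le> s" unfolding s_def using bA by (metis cSup_upper)
      thus False using that by simp
    qed
    have Vs: "L \<le> Vf (x s)"
      by (rule closed_ge_on_left[OF Vc[OF s0(1)] st]) (use after in \<open>auto simp: less_imp_le\<close>)
    have neg: "Hf \<eta> R (x \<tau>) (x \<tau>) < 0" if tau: "\<tau> \<in> {s..t}" for \<tau>
    proof -
      have t0: "\<tau> \<ge> 0" using tau s0 by auto
      have "L \<le> Vf (x \<tau>)"
      proof (cases "\<tau> = s")
        case True thus ?thesis using Vs by simp
      next
        case False thus ?thesis using after[of \<tau>] tau by auto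
      qed
      hence "Vf (x \<tau>) > real CARD('n) * B^2" unfolding L_def by linarith
      hence "norm (x \<tau>) > B" using V_upper[of "x \<tau>" B] pos t0 by force
      thus ?thesis using B[of "x \<tau>"] pos t0 cls[OF t0] by blast
    qed
    have "Vf (x t) \<le> Vf (x s)"
    proof (rule local_to_global_mono[of s t "\<lambda>\<tau>. Vf (x \<tau>)"])
      show "s \<le> t" using st by simp
      fix c assume c: "c \<in> {s..t}"
      have c0: "c \<ge> 0" using c s0 by auto
      have xcp: "\<forall>i. x c $ i > 0" using pos c0 by auto
      have hc: "Hf \<eta> R (x c) (x c) < 0" by (rule neg[OF c])
      have "continuous (at (x c, x c)) (\<lambda>z. Hf \<eta> R (fst z) (snd z))"
        by (rule Hf_cont[OF xcp eta(1)])
      then obtain e where e: "e > 0" "\<And>z. dist z (x c, x c) < e \<Longrightarrow> dist (Hf \<eta> R (fst z) (snd z)) (Hf \<eta> R (x c) (x c)) < - Hf \<eta> R (x c) (x c)"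
        unfolding continuous_at_eps_delta using hc by (metis fst_conv snd_conv neg_0_less_iff_less)
      have Hneg: "Hf \<eta> R p q < 0" if "dist p (x c) < e/2" "dist q (x c) < e/2" for p q
      proof -
        have "dist (p, q) (x c, x c) \<le> \<bar>dist p (x c)\<bar> + \<bar>dist q (x c)\<bar>"
          unfolding dist_Pair_Pair by (rule sqrt_sum_squares_le_sum_abs)
        also have "\<dots> < e" using that by simp
        finally have "dist (Hf \<eta> R p q) (Hf \<eta> R (x c) (x c)) < - Hf \<eta> R (x c) (x c)" using e(2)[of "(p,q)"] by simp
        thus ?thesis unfolding dist_real_def by linarith
      qed
      have "continuous (at c within {0..}) x" using xcont c0 by (simp add: continuous_on_eq_continuous_within)
      then obtain d where d: "d > 0" "\<And>\<tau>. \<tau> \<in> {0..} \<Longrightarrow> dist \<tau> c < d \<Longrightarrow> dist (x \<tau>) (x c) < e/2"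
        unfolding continuous_within_eps_delta using e(1) by (metis half_gt_zero)
      show "\<exists>d>0. \<forall>u v. u \<in> {s..t} \<and> v \<in> {s..t} \<and> u \<le> c \<and> c \<le> v \<and> v - u < d \<longrightarrow> Vf (x v) \<le> Vf (x u)"
      proof (intro exI[of _ d] conjI d(1) allI impI, elim conjE)
        fix u v assume uI: "u \<in> {s..t}" and vI: "v \<in> {s..t}" and uc: "u \<le> c" and cv: "c \<le> v" and uvd: "v - u < d"
        have u0: "u \<ge> 0" using uI s0 by simp
        have near: "dist (x \<tau>) (x c) < e/2" if "\<tau> \<in> {u..v}" for \<tau>
          using d(2)[of \<tau>] that u0 uc cv uvd by (auto simp: dist_real_def)
        have xvp: "\<forall>i. x v $ i > 0" and xup: "\<forall>i. x u $ i > 0" using pos u0 uc cv by auto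
        have int: "((\<lambda>\<tau>. lnv (x v) \<bullet> mak_rhs R \<kappa> \<tau> (x \<tau>)) has_integral (lnv (x v) \<bullet> (x v - x u))) {u..v}"
          by (rule has_integral_inner_const[OF sol_sub[OF sol u0 order_trans[OF uc cv]]])
        have "lnv (x v) \<bullet> (x v - x u) \<le> 0"
        proof (rule has_integral_le[OF int has_integral_0])
          fix \<tau> assume tau: "\<tau> \<in> {u..v}"
          have tau0: "\<tau> \<ge> 0" using tau u0 by auto
          have "lnv (x v) \<bullet> mak_rhs R \<kappa> \<tau> (x \<tau>) = (\<Sum>r\<in>R. \<kappa> r \<tau> * aterm (x \<tau>) (x v) r)"
            unfolding rhs_inner aterm_def by (simp add: mult.assoc)
          also have "\<dots> \<le> Hf \<eta> R (x \<tau>) (x v)"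
            unfolding Hf_def using kb tau0 eta by (intro sum_mono kappa_max) auto
          also have "\<dots> < 0" using Hneg near[OF tau] near[of v] uc cv by auto
          finally show "lnv (x v) \<bullet> mak_rhs R \<kappa> \<tau> (x \<tau>) \<le> 0" by simp
        qed
        moreover have "Vf (x v) - Vf (x u) \<le> lnv (x v) \<bullet> (x v - x u)" by (rule V_conv[OF xup xvp])
        ultimately show "Vf (x v) \<le> Vf (x u)" by simp
      qed
    qed
    moreover have "Vf (x s) \<le> L" using sA unfolding A_def by simp
    ultimately show False using Vt by simp
  qed
  have "\<forall>t\<ge>0. norm (x t) \<le> real CARD('n) * max (exp 2) (L + real CARD('n))"
  proof (intro allI impI)
    fix t :: real assume t: "t \<ge> 0"
    have "norm (x t) \<le> real CARD('n) * max (exp 2) (Vf (x t) + real CARD('n))"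
      using V_lower pos t by blast
    also have "\<dots> \<le> real CARD('n) * max (exp 2) (L + real CARD('n))"
      using VL[OF t] by (intro mult_left_mono) auto
    finally show "norm (x t) \<le> real CARD('n) * max (exp 2) (L + real CARD('n))" .
  qed
  hence allb: "\<And>t. t \<ge> 0 \<Longrightarrow> norm (x t) \<le> real CARD('n) * max (exp 2) (L + real CARD('n))" by blast
  have "\<forall>\<^sub>F t in at_top. norm (x t) \<le> real CARD('n) * max (exp 2) (L + real CARD('n))"
    by (rule eventually_mono[OF eventually_ge_at_top[of "0::real"]]) (rule allb)
  thus ?thesis by blast
qed


end
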